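(* Let $\mu=\sum_{i=1}^m a_i\delta_{u_i}$ and $\nu=\sum_{j=1}^n b_j\delta_{v_j}$ be finitely supported finite measures on $S^2\subset\mathbb{R}^3$ (with $a_i,b_j>0$). Then $$\operatorname{WFR}(\mu,\nu)^2=\inf_{(A,B)\in\mathcal A(\mu,\nu)}\sum_{i=0}^m\sum_{j=0}^n\big|\sqrt{A_{ij}}\,u_i-\sqrt{B_{ij}}\,v_j\big|^2,$$ where $u_0=v_0=(1,0,0)$.
   Context: For finite Borel measures $\mu,\nu$ on $S^2$, $\Gamma(\mu,\nu)$ is the set of pairs $(\gamma_0,\gamma_1)$ of finite Borel measures on $S^2\times S^2$ with $(\operatorname{Proj}_0)_\#\gamma_0=\mu$, $(\operatorname{Proj}_1)_\#\gamma_1=\nu$, and the Wasserstein–Fisher–Rao distance is $\operatorname{WFR}(\mu,\nu)=\inf_{(\gamma_0,\gamma_1)\in\Gamma(\mu,\nu)}\big(\int|\sqrt{\tfrac{d\gamma_0}{d\gamma}(u,v)}u-\sqrt{\tfrac{d\gamma_1}{d\gamma}(u,v)}v|^2d\gamma(u,v)\big)^{1/2}$ with $\gamma$ any measure such that $\gamma_0,\gamma_1\ll\gamma$. $\mathcal A(\mu,\nu)$ is the set of pairs $(A,B)$ of $(m+1)\times(n+1)$ matrices (indices from $0$) with $A_{ij},B_{ij}\ge0$, $a_i=\sum_{j=0}^nA_{ij}$ ($i\ge1$), $A_{0j}=0$ for all $j$, $b_j=\sum_{i=0}^mB_{ij}$ ($j\ge1$), $B_{i0}=0$ for all $i$. 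*)

theory Defs
  imports "HOL-Analysis.Analysis"
begin

definition S2 :: "(real^3) set" where
  "S2 = sphere 0 1"

definition S2B :: "(real^3) measure" where
  "S2B = restrict_space borel S2"

definition Gamma :: "(real^3) measure \<Rightarrow> (real^3) measure
    \<Rightarrow> (((real^3) \<times> (real^3)) measure \<times> ((real^3) \<times> (real^3)) measure) set" where
  "Gamma \<mu> \<nu> = {(\<gamma>0, \<gamma>1).
      sets \<gamma>0 = sets (S2B \<Otimes>\<^sub>M S2B) \<and> sets \<gamma>1 = sets (S2B \<Otimes>\<^sub>M S2B) \<and>
      finite_measure \<gamma>0 \<and> finite_measure \<gamma>1 \<and>
      distr \<gamma>0 S2B fst = \<mu> \<and> distr \<gamma>1 S2B snd = \<nu>}"

definition wfr_cost :: "((real^3) \<times> (real^3)) measure \<Rightarrow> ((real^3) \<times> (real^3)) measure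
    \<Rightarrow> ((real^3) \<times> (real^3)) measure \<Rightarrow> ennreal" where
  "wfr_cost \<gamma> \<gamma>0 \<gamma>1 =
     (\<integral>\<^sup>+ p. ennreal ((norm (sqrt (enn2real (RN_deriv \<gamma> \<gamma>0 p)) *\<^sub>R fst p
                     - sqrt (enn2real (RN_deriv \<gamma> \<gamma>1 p)) *\<^sub>R snd p))\<^sup>2) \<partial>\<gamma>)"

text \<open>WFR(mu,nu): infimum over (gamma0,gamma1) in Gamma(mu,nu) and over all sigma-finite
  measures gamma on S^2 x S^2 dominating both gamma0 and gamma1 (the cost does not depend
  on the choice of gamma), then a square root.\<close>
definition WFR :: "(real^3) measure \<Rightarrow> (real^3) measure \<Rightarrow> real" where
  "WFR \<mu> \<nu> = sqrt (enn2real (INF (\<gamma>, \<gamma>0, \<gamma>1) \<in>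
      {(\<gamma>, \<gamma>0, \<gamma>1). (\<gamma>0, \<gamma>1) \<in> Gamma \<mu> \<nu> \<and>
         sets \<gamma> = sets (S2B \<Otimes>\<^sub>M S2B) \<and> sigma_finite_measure \<gamma> \<and>
         absolutely_continuous \<gamma> \<gamma>0 \<and> absolutely_continuous \<gamma> \<gamma>1}.
      wfr_cost \<gamma> \<gamma>0 \<gamma>1))"

definition Aset :: "nat \<Rightarrow> nat \<Rightarrow> (nat \<Rightarrow> real) \<Rightarrow> (nat \<Rightarrow> real)
    \<Rightarrow> ((nat \<Rightarrow> nat \<Rightarrow> real) \<times> (nat \<Rightarrow> nat \<Rightarrow> real)) set" where
  "Aset m n a b = {(A, B).
      (\<forall>i\<in>{0..m}. \<forall>j\<in>{0..n}. A i j \<ge> 0 \<and> B i j \<ge> 0) \<and>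
      (\<forall>i\<in>{1..m}. a i = (\<Sum>j=0..n. A i j)) \<and>
      (\<forall>j\<in>{0..n}. A 0 j = 0) \<and>
      (\<forall>j\<in>{1..n}. b j = (\<Sum>i=0..m. B i j)) \<and>
      (\<forall>i\<in>{0..m}. B i 0 = 0)}"

definition e1 :: "real^3" where
  "e1 = vector [1, 0, 0]"

end

theory Submission
  imports Defs
begin

abbreviation "MM \<equiv> S2B \<Otimes>\<^sub>M S2B"

lemma space_S2B[simp]: "space S2B = S2"
  by (simp add: S2B_def space_restrict_space)

lemma space_MM[simp]: "space MM = S2 \<times> S2"
  by (simp add: space_pair_measure)

lemma S2_closed: "closed S2" by (simp add: S2_def)

lemma sets_S2B_iff: "X \<in> sets S2B \<longleftrightarrow> X \<subseteq> S2 \<and> X \<in> sets borel"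
  unfolding S2B_def
  by (metis S2_closed borel_closed sets.Int_space_eq2 sets_restrict_space_iff space_borel
      space_restrict_space Int_absorb2 sets.sets_into_space inf_top_right)

lemma finite_in_S2B: "finite X \<Longrightarrow> X \<subseteq> S2 \<Longrightarrow> X \<in> sets S2B"
  by (simp add: sets_S2B_iff finite_imp_closed borel_closed)

lemma e1_S2: "e1 \<in> S2"
  unfolding S2_def e1_def by (simp add: norm_vec_def L2_set_def vector_def sum_3)

lemma S2_infinite: "infinite S2"
proof
  assume f: "finite S2"
  have c: "connected S2" unfolding S2_def by (rule connected_sphere) simp
  have "- e1 \<in> S2" using e1_S2 by (simp add: S2_def)
  moreover have "e1 \<noteq> - e1"
  proof
    assume "e1 = - e1" then have "e1 $ 1 = - (e1 $ 1)" by (metis vector_uminus_component)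
    moreover have "e1 $ 1 = 1" by (simp add: e1_def vector_def)
    ultimately show False by simp
  qed
  ultimately show False using f c e1_S2 connected_finite_iff_sing[OF c] by (metis empty_iff singletonD)
qed

lemma fst_meas[measurable]: "(fst :: _ \<Rightarrow> real^3) \<in> borel_measurable MM"
  by (rule measurable_compose[OF measurable_fst]) (simp add: S2B_def measurable_restrict_space1)

lemma snd_meas[measurable]: "(snd :: _ \<Rightarrow> real^3) \<in> borel_measurable MM"
  by (rule measurable_compose[OF measurable_snd]) (simp add: S2B_def measurable_restrict_space1)

lemma finite_in_MM: "finite P \<Longrightarrow> P \<subseteq> S2 \<times> S2 \<Longrightarrow> P \<in> sets MM"
proof -
  assume "finite P" "P \<subseteq> S2 \<times> S2"
  then show ?thesis
  proof (induction P rule: finite_induct)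
    case empty then show ?case by simp
  next
    case (insert x F)
    have "{x} = {fst x} \<times> {snd x}" by auto
    moreover have "{fst x} \<in> sets S2B" "{snd x} \<in> sets S2B"
      using insert.prems by (auto intro!: finite_in_S2B)
    ultimately have "{x} \<in> sets MM" by (metis pair_measureI)
    then show ?case using insert by (metis insert_is_Un insert_subset sets.Un)
  qed
qed

lemma cost_formula:
  fixes \<gamma> \<gamma>0 \<gamma>1 :: "((real^3) \<times> (real^3)) measure" and U V :: "(real^3) set"
  assumes sg: "sets \<gamma> = sets MM" and sf: "sigma_finite_measure \<gamma>"
    and s0: "sets \<gamma>0 = sets MM" and s1: "sets \<gamma>1 = sets MM"
    and f0: "finite_measure \<gamma>0" and f1: "finite_measure \<gamma>1"
    and ac0: "absolutely_continuous \<gamma> \<gamma>0" and ac1: "absolutely_continuous \<gamma> \<gamma>1"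
    and U: "finite U" "U \<subseteq> S2" and V: "finite V" "V \<subseteq> S2"
    and z0: "emeasure \<gamma>0 ((S2 - U) \<times> S2) = 0" and z1: "emeasure \<gamma>1 (S2 \<times> (S2 - V)) = 0"
  shows "wfr_cost \<gamma> \<gamma>0 \<gamma>1 = ennreal (measure \<gamma>0 (S2\<times>S2 - U\<times>V) + measure \<gamma>1 (S2\<times>S2 - U\<times>V)
     + (\<Sum>p\<in>U\<times>V. (norm (sqrt (measure \<gamma>0 {p}) *\<^sub>R fst p - sqrt (measure \<gamma>1 {p}) *\<^sub>R snd p))\<^sup>2))"
proof -
  interpret sigma_finite_measure \<gamma> by (rule sf)
  interpret G0: finite_measure \<gamma>0 by (rule f0)
  interpret G1: finite_measure \<gamma>1 by (rule f1)
  define F0 where "F0 = RN_deriv \<gamma> \<gamma>0"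
  define F1 where "F1 = RN_deriv \<gamma> \<gamma>1"
  define P where "P = U \<times> V"
  define \<Omega> where "\<Omega> = S2 \<times> (S2 :: (real^3) set)"
  have sp: "space \<gamma> = \<Omega>" using sets_eq_imp_space_eq[OF sg] by (simp add: \<Omega>_def)
  have [measurable]: "F0 \<in> borel_measurable \<gamma>" "F1 \<in> borel_measurable \<gamma>"
    unfolding F0_def F1_def by simp_all
  have [measurable]: "(fst :: _ \<Rightarrow> real^3) \<in> borel_measurable \<gamma>"
    unfolding measurable_cong_sets[OF sg refl] by (rule fst_meas)
  have [measurable]: "(snd :: _ \<Rightarrow> real^3) \<in> borel_measurable \<gamma>"
    unfolding measurable_cong_sets[OF sg refl] by (rule snd_meas)
  have PO: "P \<subseteq> \<Omega>" using U V by (auto simp: P_def \<Omega>_def)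
  have finP: "finite P" using U V by (simp add: P_def)
  have [measurable]: "\<Omega> - P \<in> sets \<gamma>"
    using sp by (metis sets.compl_sets sg finite_in_MM[OF finP] PO \<Omega>_def)
  have sing[measurable]: "{p} \<in> sets \<gamma>" if "p \<in> P" for p
    using that PO sg finite_in_MM[of "{p}"] by (auto simp: \<Omega>_def)
  have d0: "density \<gamma> F0 = \<gamma>0" unfolding F0_def using ac0 s0 sg by (simp add: density_RN_deriv)
  have d1: "density \<gamma> F1 = \<gamma>1" unfolding F1_def using ac1 s1 sg by (simp add: density_RN_deriv)
  have E0: "emeasure \<gamma>0 X = (\<integral>\<^sup>+x. F0 x * indicator X x \<partial>\<gamma>)" if "X \<in> sets \<gamma>" for X
    using that by (metis d0 emeasure_density \<open>F0 \<in> borel_measurable \<gamma>\<close>)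
  have E1: "emeasure \<gamma>1 X = (\<integral>\<^sup>+x. F1 x * indicator X x \<partial>\<gamma>)" if "X \<in> sets \<gamma>" for X
    using that by (metis d1 emeasure_density \<open>F1 \<in> borel_measurable \<gamma>\<close>)
  have fin0: "AE x in \<gamma>. F0 x \<noteq> \<infinity>"
    unfolding F0_def using ac0 s0 sg G0.sigma_finite_measure_axioms by (intro RN_deriv_finite) auto
  have fin1: "AE x in \<gamma>. F1 x \<noteq> \<infinity>"
    unfolding F1_def using ac1 s1 sg G1.sigma_finite_measure_axioms by (intro RN_deriv_finite) auto
  define h where "h x = ennreal ((norm (sqrt (enn2real (F0 x)) *\<^sub>R fst x - sqrt (enn2real (F1 x)) *\<^sub>R snd x))\<^sup>2)" for x
  have [measurable]: "h \<in> borel_measurable \<gamma>" unfolding h_def by measurable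
  define \<rho> where "\<rho> p = (norm (sqrt (measure \<gamma>0 {p}) *\<^sub>R fst p - sqrt (measure \<gamma>1 {p}) *\<^sub>R snd p))\<^sup>2" for p
  have cost: "wfr_cost \<gamma> \<gamma>0 \<gamma>1 = integral\<^sup>N \<gamma> h"
    unfolding wfr_cost_def h_def F0_def F1_def by simp
  have step1: "integral\<^sup>N \<gamma> h = (\<integral>\<^sup>+x. h x * indicator (\<Omega> - P) x \<partial>\<gamma>) + (\<Sum>p\<in>P. \<integral>\<^sup>+x. h x * indicator {p} x \<partial>\<gamma>)"
  proof -
    have "(\<integral>\<^sup>+x. h x * indicator (\<Omega> - P) x \<partial>\<gamma>) + (\<Sum>p\<in>P. \<integral>\<^sup>+x. h x * indicator {p} x \<partial>\<gamma>)
       = (\<integral>\<^sup>+x. h x * indicator (\<Omega> - P) x \<partial>\<gamma>) + (\<integral>\<^sup>+x. (\<Sum>p\<in>P. h x * indicator {p} x) \<partial>\<gamma>)"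
      by (subst nn_integral_sum) (auto intro!: borel_measurable_times borel_measurable_indicator sing)
    also have "\<dots> = (\<integral>\<^sup>+x. h x * indicator (\<Omega> - P) x + (\<Sum>p\<in>P. h x * indicator {p} x) \<partial>\<gamma>)"
      by (subst nn_integral_add) (auto intro!: borel_measurable_times borel_measurable_indicator sing borel_measurable_sum)
    also have "\<dots> = integral\<^sup>N \<gamma> h"
    proof (rule nn_integral_cong)
      fix x assume "x \<in> space \<gamma>"
      then have "x \<in> \<Omega>" using sp by simp
      have "(\<Sum>p\<in>P. h x * indicator {p} x) = (\<Sum>p\<in>P. if x = p then h x else 0)"
        by (intro sum.cong) (auto split: split_indicator)
      also have "\<dots> = (if x \<in> P then h x else 0)" using finP by (simp add: sum.delta)
      finally show "h x * indicator (\<Omega> - P) x + (\<Sum>p\<in>P. h x * indicator {p} x) = h x"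
        using \<open>x \<in> \<Omega>\<close> by (auto split: split_indicator)
    qed
    finally show ?thesis by simp
  qed
  have step2: "(\<integral>\<^sup>+x. h x * indicator {p} x \<partial>\<gamma>) = ennreal (\<rho> p)" if pP: "p \<in> P" for p
  proof -
    have [measurable]: "{p} \<in> sets \<gamma>" using sing pP .
    have L: "(\<integral>\<^sup>+x. h x * indicator {p} x \<partial>\<gamma>) = h p * emeasure \<gamma> {p}" by simp
    have e0: "emeasure \<gamma>0 {p} = F0 p * emeasure \<gamma> {p}" using E0[of "{p}"] by simp
    have e1: "emeasure \<gamma>1 {p} = F1 p * emeasure \<gamma> {p}" using E1[of "{p}"] by simp
    have fe0: "emeasure \<gamma>0 {p} \<noteq> \<infinity>" by simp
    have fe1: "emeasure \<gamma>1 {p} \<noteq> \<infinity>" by simp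
    have m0: "measure \<gamma>0 {p} = enn2real (emeasure \<gamma>0 {p})" by (simp add: measure_def)
    have m1: "measure \<gamma>1 {p} = enn2real (emeasure \<gamma>1 {p})" by (simp add: measure_def)
    show ?thesis
    proof (cases "emeasure \<gamma> {p}" rule: ennreal_cases)
      case (real c)
      show ?thesis
      proof (cases "c = 0")
        case True
        then show ?thesis using L e0 e1 m0 m1 real by (simp add: \<rho>_def)
      next
        case False
        then have cpos: "c > 0" using real by simp
        have "F0 p \<noteq> \<infinity>" using fe0 e0 real cpos by (auto simp: ennreal_mult_eq_top_iff)
        then obtain r0 where r0: "F0 p = ennreal r0" "r0 \<ge> 0" by (cases "F0 p" rule: ennreal_cases) auto
        have "F1 p \<noteq> \<infinity>" using fe1 e1 real cpos by (auto simp: ennreal_mult_eq_top_iff)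
        then obtain r1 where r1: "F1 p = ennreal r1" "r1 \<ge> 0" by (cases "F1 p" rule: ennreal_cases) auto
        have M0: "measure \<gamma>0 {p} = r0 * c" using m0 e0 r0 real cpos by (simp add: ennreal_mult[symmetric])
        have M1: "measure \<gamma>1 {p} = r1 * c" using m1 e1 r1 real cpos by (simp add: ennreal_mult[symmetric])
        define N where "N = norm (sqrt r0 *\<^sub>R fst p - sqrt r1 *\<^sub>R snd p)"
        have "sqrt (r0 * c) *\<^sub>R fst p - sqrt (r1 * c) *\<^sub>R snd p = sqrt c *\<^sub>R (sqrt r0 *\<^sub>R fst p - sqrt r1 *\<^sub>R snd p)"
          by (simp add: real_sqrt_mult scaleR_right_diff_distrib mult.commute)
        then have "\<rho> p = c * N\<^sup>2" using cpos
          by (simp add: \<rho>_def M0 M1 N_def power_mult_distrib)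
        moreover have "h p = ennreal (N\<^sup>2)" using r0 r1 by (simp add: h_def N_def)
        ultimately show ?thesis using L real cpos by (simp add: ennreal_mult[symmetric] mult.commute)
      qed
    next
      case top
      have "F0 p = 0" using fe0 e0 top by (auto simp: ennreal_mult_eq_top_iff)
      moreover have "F1 p = 0" using fe1 e1 top by (auto simp: ennreal_mult_eq_top_iff)
      ultimately show ?thesis using L e0 e1 m0 m1 top by (simp add: \<rho>_def h_def)
    qed
  qed
  have sU: "S2 - U \<in> sets S2B" using U by (metis finite_in_S2B sets.compl_sets space_S2B)
  have sV: "S2 - V \<in> sets S2B" using V by (metis finite_in_S2B sets.compl_sets space_S2B)
  have R0: "(S2 - U) \<times> S2 \<in> sets \<gamma>" using sU sg by (metis pair_measureI sets.top space_S2B)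
  have R1: "S2 \<times> (S2 - V) \<in> sets \<gamma>" using sV sg by (metis pair_measureI sets.top space_S2B)
  have Z0: "AE x in \<gamma>. x \<in> (S2 - U) \<times> S2 \<longrightarrow> F0 x = 0"
  proof -
    have "(\<integral>\<^sup>+x. F0 x * indicator ((S2 - U) \<times> S2) x \<partial>\<gamma>) = 0" using E0[OF R0] z0 by simp
    then have "AE x in \<gamma>. F0 x * indicator ((S2 - U) \<times> S2) x = 0"
      using R0 by (subst nn_integral_0_iff_AE[symmetric]) auto
    then show ?thesis by (rule AE_mp) (auto intro!: AE_I2 split: split_indicator)
  qed
  have Z1: "AE x in \<gamma>. x \<in> S2 \<times> (S2 - V) \<longrightarrow> F1 x = 0"
  proof -
    have "(\<integral>\<^sup>+x. F1 x * indicator (S2 \<times> (S2 - V)) x \<partial>\<gamma>) = 0" using E1[OF R1] z1 by simp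
    then have "AE x in \<gamma>. F1 x * indicator (S2 \<times> (S2 - V)) x = 0"
      using R1 by (subst nn_integral_0_iff_AE[symmetric]) auto
    then show ?thesis by (rule AE_mp) (auto intro!: AE_I2 split: split_indicator)
  qed
  have AEh: "AE x in \<gamma>. h x * indicator (\<Omega> - P) x =
      ennreal (enn2real (F0 x)) * indicator (\<Omega> - P) x + ennreal (enn2real (F1 x)) * indicator (\<Omega> - P) x"
  proof -
    have "AE x in \<gamma>. x \<in> space \<gamma>" by simp
    with Z0 Z1 show ?thesis
    proof eventually_elim
      case (elim x)
      then have xO: "x \<in> \<Omega>" using sp by simp
      show ?case
      proof (cases "x \<in> P")
        case True then show ?thesis by simp
      next
        case False
        obtain a b where ab: "x = (a, b)" by (cases x)
        have aS: "a \<in> S2" and bS: "b \<in> S2" using xO ab by (auto simp: \<Omega>_def)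
        have na: "norm a = 1" and nb: "norm b = 1" using aS bS by (auto simp: S2_def)
        have "a \<notin> U \<or> b \<notin> V" using False ab by (auto simp: P_def)
        then show ?thesis
        proof
          assume "a \<notin> U"
          then have "F0 x = 0" using elim aS bS ab by auto
          then show ?thesis using False xO ab nb by (simp add: h_def)
        next
          assume "b \<notin> V"
          then have "F1 x = 0" using elim aS bS ab by auto
          then show ?thesis using False xO ab na by (simp add: h_def)
        qed
      qed
    qed
  qed
  have I0: "(\<integral>\<^sup>+x. ennreal (enn2real (F0 x)) * indicator (\<Omega> - P) x \<partial>\<gamma>) = ennreal (measure \<gamma>0 (\<Omega> - P))"
  proof -
    have "(\<integral>\<^sup>+x. ennreal (enn2real (F0 x)) * indicator (\<Omega> - P) x \<partial>\<gamma>) = (\<integral>\<^sup>+x. F0 x * indicator (\<Omega> - P) x \<partial>\<gamma>)"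
      by (rule nn_integral_cong_AE, rule AE_mp[OF fin0]) (auto intro!: AE_I2 simp: less_top)
    also have "\<dots> = emeasure \<gamma>0 (\<Omega> - P)" using E0 by simp
    finally show ?thesis by (simp add: G0.emeasure_eq_measure)
  qed
  have I1: "(\<integral>\<^sup>+x. ennreal (enn2real (F1 x)) * indicator (\<Omega> - P) x \<partial>\<gamma>) = ennreal (measure \<gamma>1 (\<Omega> - P))"
  proof -
    have "(\<integral>\<^sup>+x. ennreal (enn2real (F1 x)) * indicator (\<Omega> - P) x \<partial>\<gamma>) = (\<integral>\<^sup>+x. F1 x * indicator (\<Omega> - P) x \<partial>\<gamma>)"
      by (rule nn_integral_cong_AE, rule AE_mp[OF fin1]) (auto intro!: AE_I2 simp: less_top)
    also have "\<dots> = emeasure \<gamma>1 (\<Omega> - P)" using E1 by simp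
    finally show ?thesis by (simp add: G1.emeasure_eq_measure)
  qed
  have step3: "(\<integral>\<^sup>+x. h x * indicator (\<Omega> - P) x \<partial>\<gamma>) = ennreal (measure \<gamma>0 (\<Omega> - P)) + ennreal (measure \<gamma>1 (\<Omega> - P))"
  proof -
    have "(\<integral>\<^sup>+x. h x * indicator (\<Omega> - P) x \<partial>\<gamma>) = (\<integral>\<^sup>+x. ennreal (enn2real (F0 x)) * indicator (\<Omega> - P) x + ennreal (enn2real (F1 x)) * indicator (\<Omega> - P) x \<partial>\<gamma>)"
      by (rule nn_integral_cong_AE[OF AEh])
    also have "\<dots> = (\<integral>\<^sup>+x. ennreal (enn2real (F0 x)) * indicator (\<Omega> - P) x \<partial>\<gamma>) + (\<integral>\<^sup>+x. ennreal (enn2real (F1 x)) * indicator (\<Omega> - P) x \<partial>\<gamma>)"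
      by (rule nn_integral_add) auto
    finally show ?thesis using I0 I1 by simp
  qed
  have r0: "\<And>p. \<rho> p \<ge> 0" by (simp add: \<rho>_def)
  have "(\<Sum>p\<in>P. \<integral>\<^sup>+x. h x * indicator {p} x \<partial>\<gamma>) = (\<Sum>p\<in>P. ennreal (\<rho> p))"
    using step2 by (rule sum.cong[OF refl])
  also have "\<dots> = ennreal (\<Sum>p\<in>P. \<rho> p)" using r0 by simp
  finally have "wfr_cost \<gamma> \<gamma>0 \<gamma>1 = ennreal (measure \<gamma>0 (\<Omega> - P)) + ennreal (measure \<gamma>1 (\<Omega> - P)) + ennreal (\<Sum>p\<in>P. \<rho> p)"
    using cost step1 step3 by simp
  also have "\<dots> = ennreal (measure \<gamma>0 (\<Omega> - P) + measure \<gamma>1 (\<Omega> - P) + (\<Sum>p\<in>P. \<rho> p))"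
    using r0 by (simp add: ennreal_plus sum_nonneg)
  finally show ?thesis unfolding \<rho>_def P_def \<Omega>_def .
qed

definition Dc :: "nat \<Rightarrow> nat \<Rightarrow> (nat \<Rightarrow> real^3) \<Rightarrow> (nat \<Rightarrow> real^3) \<Rightarrow> (nat \<Rightarrow> nat \<Rightarrow> real) \<Rightarrow> (nat \<Rightarrow> nat \<Rightarrow> real) \<Rightarrow> real" where
  "Dc m n u v A B = (\<Sum>i=0..m. \<Sum>j=0..n. (norm (sqrt (A i j) *\<^sub>R u i - sqrt (B i j) *\<^sub>R v j))\<^sup>2)"

lemma sum_from0: "(\<Sum>i=0..m. f i) = f 0 + (\<Sum>i=1..m. f i)" for f :: "nat \<Rightarrow> real"
  by (simp add: sum.atLeast_Suc_atMost)

lemma norm_S2: "x \<in> S2 \<Longrightarrow> norm x = 1" by (simp add: S2_def)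

lemma D_decomp:
  assumes AB: "(A, B) \<in> Aset m n a b"
    and u_S2: "\<forall>i\<in>{1..m}. u i \<in> S2" and v_S2: "\<forall>j\<in>{1..n}. v j \<in> S2"
  shows "Dc m n u v A B = (\<Sum>i=1..m. A i 0) + (\<Sum>j=1..n. B 0 j)
     + (\<Sum>i=1..m. \<Sum>j=1..n. (norm (sqrt (A i j) *\<^sub>R u i - sqrt (B i j) *\<^sub>R v j))\<^sup>2)"
proof -
  have nn: "\<And>i j. i \<in> {0..m} \<Longrightarrow> j \<in> {0..n} \<Longrightarrow> A i j \<ge> 0 \<and> B i j \<ge> 0"
    and A0: "\<And>j. j \<in> {0..n} \<Longrightarrow> A 0 j = 0" and B0: "\<And>i. i \<in> {0..m} \<Longrightarrow> B i 0 = 0"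
    using AB by (auto simp: Aset_def)
  define t where "t i j = (norm (sqrt (A i j) *\<^sub>R u i - sqrt (B i j) *\<^sub>R v j))\<^sup>2" for i j
  have t00: "t 0 0 = 0" using A0[of 0] B0[of 0] by (simp add: t_def)
  have t0j: "t 0 j = B 0 j" if "j \<in> {1..n}" for j
    using that A0[of j] nn[of 0 j] norm_S2[of "v j"] v_S2 by (simp add: t_def)
  have ti0: "t i 0 = A i 0" if "i \<in> {1..m}" for i
    using that B0[of i] nn[of i 0] norm_S2[of "u i"] u_S2 by (simp add: t_def)
  have "Dc m n u v A B = (\<Sum>i=0..m. \<Sum>j=0..n. t i j)" by (simp add: Dc_def t_def)
  also have "\<dots> = (\<Sum>j=0..n. t 0 j) + (\<Sum>i=1..m. t i 0 + (\<Sum>j=1..n. t i j))"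
    by (simp add: sum_from0[of _ m] sum_from0[of _ n])
  also have "(\<Sum>j=0..n. t 0 j) = (\<Sum>j=1..n. B 0 j)"
    using t00 t0j by (simp add: sum_from0[of _ n])
  also have "(\<Sum>i=1..m. t i 0 + (\<Sum>j=1..n. t i j)) = (\<Sum>i=1..m. A i 0) + (\<Sum>i=1..m. \<Sum>j=1..n. t i j)"
    using ti0 by (simp add: sum.distrib)
  finally show ?thesis by (simp add: t_def)
qed

lemma P_sum:
  assumes "inj_on u {1..m}" "inj_on v {1..n}"
  shows "(\<Sum>p\<in>u ` {1..m} \<times> v ` {1..n}. f p) = (\<Sum>i=1..m. \<Sum>j=1..n. f (u i, v j))"
proof -
  have e: "u ` {1..m} \<times> v ` {1..n} = (\<lambda>(i,j). (u i, v j)) ` ({1..m} \<times> {1..n})" by auto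
  have i: "inj_on (\<lambda>(i,j). (u i, v j)) ({1..m} \<times> {1..n})"
    using assms by (auto simp: inj_on_def)
  show ?thesis unfolding e sum.reindex[OF i] by (simp add: sum.cartesian_product comp_def case_prod_unfold)
qed

lemma cost_eq_D:
  fixes \<gamma> \<gamma>0 \<gamma>1 :: "((real^3) \<times> (real^3)) measure"
  assumes sg: "sets \<gamma> = sets MM" and sf: "sigma_finite_measure \<gamma>"
    and s0: "sets \<gamma>0 = sets MM" and s1: "sets \<gamma>1 = sets MM"
    and f0: "finite_measure \<gamma>0" and f1: "finite_measure \<gamma>1"
    and ac0: "absolutely_continuous \<gamma> \<gamma>0" and ac1: "absolutely_continuous \<gamma> \<gamma>1"
    and u_S2: "\<forall>i\<in>{1..m}. u i \<in> S2" and v_S2: "\<forall>j\<in>{1..n}. v j \<in> S2"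
    and u_inj: "inj_on u {1..m}" and v_inj: "inj_on v {1..n}"
    and z0: "emeasure \<gamma>0 ((S2 - u ` {1..m}) \<times> S2) = 0" and z1: "emeasure \<gamma>1 (S2 \<times> (S2 - v ` {1..n})) = 0"
    and AB: "(A, B) \<in> Aset m n a b"
    and r0: "measure \<gamma>0 (S2\<times>S2 - u ` {1..m} \<times> v ` {1..n}) = (\<Sum>i=1..m. A i 0)"
    and r1: "measure \<gamma>1 (S2\<times>S2 - u ` {1..m} \<times> v ` {1..n}) = (\<Sum>j=1..n. B 0 j)"
    and at0: "\<And>i j. i \<in> {1..m} \<Longrightarrow> j \<in> {1..n} \<Longrightarrow> measure \<gamma>0 {(u i, v j)} = A i j"
    and at1: "\<And>i j. i \<in> {1..m} \<Longrightarrow> j \<in> {1..n} \<Longrightarrow> measure \<gamma>1 {(u i, v j)} = B i j"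
  shows "wfr_cost \<gamma> \<gamma>0 \<gamma>1 = ennreal (Dc m n u v A B)"
proof -
  have "wfr_cost \<gamma> \<gamma>0 \<gamma>1 = ennreal ((\<Sum>i=1..m. A i 0) + (\<Sum>j=1..n. B 0 j)
     + (\<Sum>p\<in>u ` {1..m} \<times> v ` {1..n}. (norm (sqrt (measure \<gamma>0 {p}) *\<^sub>R fst p - sqrt (measure \<gamma>1 {p}) *\<^sub>R snd p))\<^sup>2))"
    using cost_formula[OF sg sf s0 s1 f0 f1 ac0 ac1 _ _ _ _ z0 z1] u_S2 v_S2 r0 r1 by auto
  also have "(\<Sum>p\<in>u ` {1..m} \<times> v ` {1..n}. (norm (sqrt (measure \<gamma>0 {p}) *\<^sub>R fst p - sqrt (measure \<gamma>1 {p}) *\<^sub>R snd p))\<^sup>2)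
     = (\<Sum>i=1..m. \<Sum>j=1..n. (norm (sqrt (A i j) *\<^sub>R u i - sqrt (B i j) *\<^sub>R v j))\<^sup>2)"
    unfolding P_sum[OF u_inj v_inj] using at0 at1 by (intro sum.cong refl) auto
  finally show ?thesis using D_decomp[OF AB u_S2 v_S2] by simp
qed

definition pm :: "'k set \<Rightarrow> ('k \<Rightarrow> real) \<Rightarrow> ('k \<Rightarrow> (real^3) \<times> (real^3)) \<Rightarrow> ((real^3) \<times> (real^3)) measure" where
  "pm K w \<psi> = distr (density (count_space K) (\<lambda>k. ennreal (w k))) MM \<psi>"

lemma pm_sets[simp]: "sets (pm K w \<psi>) = sets MM" by (simp add: pm_def)

lemma pm_emeasure:
  assumes K: "finite K" and w: "\<And>k. k \<in> K \<Longrightarrow> w k \<ge> 0" and psi: "\<And>k. k \<in> K \<Longrightarrow> \<psi> k \<in> S2 \<times> S2"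
    and X: "X \<in> sets MM"
  shows "emeasure (pm K w \<psi>) X = ennreal (\<Sum>k\<in>K. w k * indicator X (\<psi> k))"
proof -
  have m: "\<psi> \<in> measurable (density (count_space K) (\<lambda>k. ennreal (w k))) MM"
    using psi by (simp add: measurable_count_space_eq1 Pi_iff)
  have "emeasure (pm K w \<psi>) X = emeasure (density (count_space K) (\<lambda>k. ennreal (w k))) (\<psi> -` X \<inter> K)"
    unfolding pm_def using m X by (simp add: emeasure_distr)
  also have "\<dots> = (\<integral>\<^sup>+k. ennreal (w k) * indicator (\<psi> -` X \<inter> K) k \<partial>count_space K)"
    by (subst emeasure_density) auto
  also have "\<dots> = (\<Sum>k\<in>K. ennreal (w k) * indicator (\<psi> -` X \<inter> K) k)"
    using K by (simp add: nn_integral_count_space_finite)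
  also have "\<dots> = (\<Sum>k\<in>K. ennreal (w k * indicator X (\<psi> k)))"
    by (intro sum.cong refl) (auto split: split_indicator)
  also have "\<dots> = ennreal (\<Sum>k\<in>K. w k * indicator X (\<psi> k))"
    using w by (intro sum_ennreal) auto
  finally show ?thesis .
qed

lemma pm_measure:
  assumes K: "finite K" and w: "\<And>k. k \<in> K \<Longrightarrow> w k \<ge> 0" and psi: "\<And>k. k \<in> K \<Longrightarrow> \<psi> k \<in> S2 \<times> S2"
    and X: "X \<in> sets MM"
  shows "measure (pm K w \<psi>) X = (\<Sum>k\<in>K. w k * indicator X (\<psi> k))"
  using pm_emeasure[OF assms] w by (simp add: measure_def sum_nonneg)

lemma pm_finite:
  assumes K: "finite K" and w: "\<And>k. k \<in> K \<Longrightarrow> w k \<ge> 0" and psi: "\<And>k. k \<in> K \<Longrightarrow> \<psi> k \<in> S2 \<times> S2"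
  shows "finite_measure (pm K w \<psi>)"
proof (rule finite_measureI)
  have "space (pm K w \<psi>) = space MM" by (simp add: pm_def)
  then show "emeasure (pm K w \<psi>) (space (pm K w \<psi>)) \<noteq> \<infinity>"
    using pm_emeasure[of K w \<psi> "space MM"] K w psi sets.top[of MM] by simp
qed

lemma pm_space[simp]: "space (pm K w \<psi>) = S2 \<times> S2" by (simp add: pm_def)

lemma pm_marg:
  assumes K: "finite K" and w: "\<And>k. k \<in> K \<Longrightarrow> w k \<ge> 0" and psi: "\<And>k. k \<in> K \<Longrightarrow> \<psi> k \<in> S2 \<times> S2"
    and X: "X \<in> sets S2B"
  shows "emeasure (distr (pm K w \<psi>) S2B fst) X = ennreal (\<Sum>k\<in>K. w k * indicator X (fst (\<psi> k)))"
    and "emeasure (distr (pm K w \<psi>) S2B snd) X = ennreal (\<Sum>k\<in>K. w k * indicator X (snd (\<psi> k)))"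
proof -
  have XS: "X \<subseteq> S2" using X sets.sets_into_space by fastforce
  have mf: "fst \<in> measurable (pm K w \<psi>) S2B" and ms: "snd \<in> measurable (pm K w \<psi>) S2B"
    by (simp_all add: measurable_cong_sets[OF pm_sets refl])
  have e1: "fst -` X \<inter> space (pm K w \<psi>) = X \<times> S2" using XS by auto
  have e2: "snd -` X \<inter> space (pm K w \<psi>) = S2 \<times> X" using XS by auto
  have s1: "X \<times> S2 \<in> sets MM" using X by (metis pair_measureI sets.top space_S2B)
  have s2: "S2 \<times> X \<in> sets MM" using X by (metis pair_measureI sets.top space_S2B)
  show "emeasure (distr (pm K w \<psi>) S2B fst) X = ennreal (\<Sum>k\<in>K. w k * indicator X (fst (\<psi> k)))"
  proof -
    have "emeasure (distr (pm K w \<psi>) S2B fst) X = emeasure (pm K w \<psi>) (fst -` X \<inter> space (pm K w \<psi>))"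
      by (rule emeasure_distr[OF mf X])
    also have "\<dots> = ennreal (\<Sum>k\<in>K. w k * indicator (fst -` X \<inter> space (pm K w \<psi>)) (\<psi> k))"
      unfolding e1 by (rule pm_emeasure[OF K w psi s1])
    also have "\<dots> = ennreal (\<Sum>k\<in>K. w k * indicator X (fst (\<psi> k)))"
      using psi by (intro arg_cong[where f=ennreal] sum.cong refl) (auto split: split_indicator)
    finally show ?thesis .
  qed
  show "emeasure (distr (pm K w \<psi>) S2B snd) X = ennreal (\<Sum>k\<in>K. w k * indicator X (snd (\<psi> k)))"
  proof -
    have "emeasure (distr (pm K w \<psi>) S2B snd) X = emeasure (pm K w \<psi>) (snd -` X \<inter> space (pm K w \<psi>))"
      by (rule emeasure_distr[OF ms X])
    also have "\<dots> = ennreal (\<Sum>k\<in>K. w k * indicator (snd -` X \<inter> space (pm K w \<psi>)) (\<psi> k))"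
      unfolding e2 by (rule pm_emeasure[OF K w psi s2])
    also have "\<dots> = ennreal (\<Sum>k\<in>K. w k * indicator X (snd (\<psi> k)))"
      using psi by (intro arg_cong[where f=ennreal] sum.cong refl) (auto split: split_indicator)
    finally show ?thesis .
  qed
qed

lemma pm_ac:
  assumes K: "finite K" and w: "\<And>k. k \<in> K \<Longrightarrow> w k \<ge> 0" and psi: "\<And>k. k \<in> K \<Longrightarrow> \<psi> k \<in> S2 \<times> S2"
    and K': "finite K'" and psi': "\<And>k. k \<in> K' \<Longrightarrow> \<psi>' k \<in> S2 \<times> S2"
    and cov: "\<And>k. k \<in> K \<Longrightarrow> \<psi> k \<in> \<psi>' ` K'"
  shows "absolutely_continuous (pm K' (\<lambda>_. 1) \<psi>') (pm K w \<psi>)"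
  unfolding absolutely_continuous_def
proof
  fix X assume "X \<in> null_sets (pm K' (\<lambda>_. 1) \<psi>')"
  then have X: "X \<in> sets MM" and z: "emeasure (pm K' (\<lambda>_. 1) \<psi>') X = 0" by auto
  have "(\<Sum>k\<in>K'. 1 * indicator X (\<psi>' k)) = (0::real)"
    using z pm_emeasure[of K' "\<lambda>_. 1" \<psi>' X] K' psi' X by (simp add: sum_nonneg)
  then have "\<forall>k\<in>K'. indicator X (\<psi>' k) = (0::real)"
    using K' by (subst (asm) sum_nonneg_eq_0_iff) auto
  then have nX: "\<psi>' k \<notin> X" if "k \<in> K'" for k using that by (auto split: split_indicator_asm)
  have "(\<Sum>k\<in>K. w k * indicator X (\<psi> k)) = 0"
    using cov nX by (intro sum.neutral ballI) (metis imageE indicator_simps(2) mult_zero_right)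
  then have "emeasure (pm K w \<psi>) X = 0" using pm_emeasure[of K w \<psi>, OF K w psi X] by simp
  then show "X \<in> null_sets (pm K w \<psi>)" using X by auto
qed

lemma upper:
  fixes m n :: nat and a b :: "nat \<Rightarrow> real" and u v :: "nat \<Rightarrow> real^3"
    and \<mu> \<nu> :: "(real^3) measure"
  assumes u_S2: "\<forall>i\<in>{1..m}. u i \<in> S2"
    and v_S2: "\<forall>j\<in>{1..n}. v j \<in> S2"
    and u_inj: "inj_on u {1..m}"
    and v_inj: "inj_on v {1..n}"
    and u0: "u 0 = e1"
    and v0: "v 0 = e1"
    and mu_sets: "sets \<mu> = sets S2B"
    and mu_def: "\<forall>X\<in>sets \<mu>. emeasure \<mu> X = (\<Sum>i\<in>{1..m}. ennreal (a i) * indicator X (u i))"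
    and nu_sets: "sets \<nu> = sets S2B"
    and nu_def: "\<forall>X\<in>sets \<nu>. emeasure \<nu> X = (\<Sum>j\<in>{1..n}. ennreal (b j) * indicator X (v j))"
    and AB: "(A, B) \<in> Aset m n a b"
  shows "\<exists>\<gamma> \<gamma>0 \<gamma>1. (\<gamma>0, \<gamma>1) \<in> Gamma \<mu> \<nu> \<and> sets \<gamma> = sets MM \<and> sigma_finite_measure \<gamma> \<and>
     absolutely_continuous \<gamma> \<gamma>0 \<and> absolutely_continuous \<gamma> \<gamma>1 \<and> wfr_cost \<gamma> \<gamma>0 \<gamma>1 = ennreal (Dc m n u v A B)"
proof -
  have nn: "\<And>i j. i \<in> {0..m} \<Longrightarrow> j \<in> {0..n} \<Longrightarrow> A i j \<ge> 0 \<and> B i j \<ge> 0"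
    and asum: "\<And>i. i \<in> {1..m} \<Longrightarrow> a i = (\<Sum>j=0..n. A i j)"
    and A0: "\<And>j. j \<in> {0..n} \<Longrightarrow> A 0 j = 0"
    and bsum: "\<And>j. j \<in> {1..n} \<Longrightarrow> b j = (\<Sum>i=0..m. B i j)"
    and B0: "\<And>i. i \<in> {0..m} \<Longrightarrow> B i 0 = 0"
    using AB by (auto simp: Aset_def)
  have apos: "a i \<ge> 0" if "i \<in> {1..m}" for i
    using asum[OF that] nn that by (auto intro!: sum_nonneg)
  have bpos: "b j \<ge> 0" if "j \<in> {1..n}" for j
    using bsum[OF that] nn that by (auto intro!: sum_nonneg)
  define U where "U = u ` {1..m}"
  define V where "V = v ` {1..n}"
  have finU: "finite U" and finV: "finite V" by (simp_all add: U_def V_def)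
  obtain w where w: "w \<in> S2" "w \<notin> V"
    using S2_infinite finV by (metis Diff_iff Diff_infinite_finite infinite_imp_nonempty ex_in_conv)
  obtain w' where w': "w' \<in> S2" "w' \<notin> U"
    using S2_infinite finU by (metis Diff_iff Diff_infinite_finite infinite_imp_nonempty ex_in_conv)
  have uS: "u i \<in> S2" if "i \<in> {0..m}" for i
    using that u_S2 u0 e1_S2 by (cases "i = 0") auto
  have vS: "v j \<in> S2" if "j \<in> {0..n}" for j
    using that v_S2 v0 e1_S2 by (cases "j = 0") auto
  define K where "K = {0..m} \<times> {0..n}"
  have finK: "finite K" by (simp add: K_def)
  define \<psi>0 where "\<psi>0 = (\<lambda>(i,j). (u i, if j = 0 then w else v j))"
  define \<psi>1 where "\<psi>1 = (\<lambda>(i,j). (if i = 0 then w' else u i, v j))"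
  define W0 where "W0 = (\<lambda>(i,j). A i j)"
  define W1 where "W1 = (\<lambda>(i,j). B i j)"
  have W0nn: "\<And>k. k \<in> K \<Longrightarrow> W0 k \<ge> 0" using nn by (auto simp: K_def W0_def)
  have W1nn: "\<And>k. k \<in> K \<Longrightarrow> W1 k \<ge> 0" using nn by (auto simp: K_def W1_def)
  have p0S: "\<And>k. k \<in> K \<Longrightarrow> \<psi>0 k \<in> S2 \<times> S2" using uS vS w by (auto simp: K_def \<psi>0_def)
  have p1S: "\<And>k. k \<in> K \<Longrightarrow> \<psi>1 k \<in> S2 \<times> S2" using uS vS w' by (auto simp: K_def \<psi>1_def)
  define K' where "K' = K \<times> (UNIV :: bool set)"
  have finK': "finite K'" using finK by (simp add: K'_def)
  define \<psi>' where "\<psi>' = (\<lambda>(k, c::bool). if c then \<psi>1 k else \<psi>0 k)"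
  have p'S: "\<And>k. k \<in> K' \<Longrightarrow> \<psi>' k \<in> S2 \<times> S2" using p0S p1S by (auto simp: K'_def \<psi>'_def)
  define \<gamma>0 where "\<gamma>0 = pm K W0 \<psi>0"
  define \<gamma>1 where "\<gamma>1 = pm K W1 \<psi>1"
  define \<gamma> where "\<gamma> = pm K' (\<lambda>_. 1) \<psi>'"
  have f0: "finite_measure \<gamma>0" unfolding \<gamma>0_def by (rule pm_finite[OF finK W0nn p0S])
  have f1: "finite_measure \<gamma>1" unfolding \<gamma>1_def by (rule pm_finite[OF finK W1nn p1S])
  have f: "finite_measure \<gamma>" unfolding \<gamma>_def by (rule pm_finite[OF finK' _ p'S]) simp
  then have sf: "sigma_finite_measure \<gamma>" by (simp add: finite_measure_def)
  have ac0: "absolutely_continuous \<gamma> \<gamma>0" unfolding \<gamma>_def \<gamma>0_def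
    apply (rule pm_ac[OF finK W0nn p0S finK' p'S])
    apply (auto simp: K'_def \<psi>'_def image_iff)
    done
  have ac1: "absolutely_continuous \<gamma> \<gamma>1" unfolding \<gamma>_def \<gamma>1_def
    apply (rule pm_ac[OF finK W1nn p1S finK' p'S])
    apply (auto simp: K'_def \<psi>'_def image_iff)
    done
  have sumK: "(\<Sum>k\<in>K. f k) = (\<Sum>i=0..m. \<Sum>j=0..n. f (i, j))" for f :: "nat \<times> nat \<Rightarrow> real"
    by (simp add: K_def sum.cartesian_product)
  have marg0: "distr \<gamma>0 S2B fst = \<mu>"
  proof (rule measure_eqI)
    show "sets (distr \<gamma>0 S2B fst) = sets \<mu>" using mu_sets by simp
    fix X assume "X \<in> sets (distr \<gamma>0 S2B fst)"
    then have X: "X \<in> sets S2B" by simp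
    have "emeasure (distr \<gamma>0 S2B fst) X = ennreal (\<Sum>k\<in>K. W0 k * indicator X (fst (\<psi>0 k)))"
      unfolding \<gamma>0_def by (rule pm_marg(1)[OF finK W0nn p0S X])
    also have "(\<Sum>k\<in>K. W0 k * indicator X (fst (\<psi>0 k))) = (\<Sum>i=0..m. \<Sum>j=0..n. A i j * indicator X (u i))"
      unfolding sumK by (simp add: W0_def \<psi>0_def)
    also have "\<dots> = (\<Sum>i=0..m. indicator X (u i) * (\<Sum>j=0..n. A i j))"
      by (simp add: sum_distrib_left mult.commute)
    also have "\<dots> = (\<Sum>i=1..m. indicator X (u i) * a i)"
      using A0 asum by (simp add: sum_from0[of _ m])
    also have "ennreal \<dots> = emeasure \<mu> X"
    proof -
      have "(\<Sum>i=1..m. ennreal (a i) * indicator X (u i)) = (\<Sum>i=1..m. ennreal (indicator X (u i) * a i))"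
        by (intro sum.cong refl) (auto split: split_indicator)
      also have "\<dots> = ennreal (\<Sum>i=1..m. indicator X (u i) * a i)"
        using apos by (intro sum_ennreal) auto
      finally show ?thesis using mu_def X mu_sets by simp
    qed
    finally show "emeasure (distr \<gamma>0 S2B fst) X = emeasure \<mu> X" .
  qed
  have marg1: "distr \<gamma>1 S2B snd = \<nu>"
  proof (rule measure_eqI)
    show "sets (distr \<gamma>1 S2B snd) = sets \<nu>" using nu_sets by simp
    fix X assume "X \<in> sets (distr \<gamma>1 S2B snd)"
    then have X: "X \<in> sets S2B" by simp
    have "emeasure (distr \<gamma>1 S2B snd) X = ennreal (\<Sum>k\<in>K. W1 k * indicator X (snd (\<psi>1 k)))"
      unfolding \<gamma>1_def by (rule pm_marg(2)[OF finK W1nn p1S X])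
    also have "(\<Sum>k\<in>K. W1 k * indicator X (snd (\<psi>1 k))) = (\<Sum>j=0..n. \<Sum>i=0..m. B i j * indicator X (v j))"
      unfolding sumK by (subst sum.swap) (simp add: W1_def \<psi>1_def)
    also have "\<dots> = (\<Sum>j=0..n. indicator X (v j) * (\<Sum>i=0..m. B i j))"
      by (simp add: sum_distrib_left mult.commute)
    also have "\<dots> = (\<Sum>j=1..n. indicator X (v j) * b j)"
      using B0 bsum by (simp add: sum_from0[of _ n])
    also have "ennreal \<dots> = emeasure \<nu> X"
    proof -
      have "(\<Sum>i=1..n. ennreal (b i) * indicator X (v i)) = (\<Sum>i=1..n. ennreal (indicator X (v i) * b i))"
        by (intro sum.cong refl) (auto split: split_indicator)
      also have "\<dots> = ennreal (\<Sum>i=1..n. indicator X (v i) * b i)"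
        using bpos by (intro sum_ennreal) auto
      finally show ?thesis using nu_def X nu_sets by simp
    qed
    finally show "emeasure (distr \<gamma>1 S2B snd) X = emeasure \<nu> X" .
  qed
  have G: "(\<gamma>0, \<gamma>1) \<in> Gamma \<mu> \<nu>"
    unfolding Gamma_def using f0 f1 marg0 marg1 by (simp add: \<gamma>0_def \<gamma>1_def)
  have sg: "sets \<gamma> = sets MM" by (simp add: \<gamma>_def)
  have mes0: "measure \<gamma>0 X = (\<Sum>i=0..m. \<Sum>j=0..n. A i j * indicator X (u i, if j = 0 then w else v j))"
    if "X \<in> sets MM" for X
  proof -
    have "measure \<gamma>0 X = (\<Sum>k\<in>K. W0 k * indicator X (\<psi>0 k))"
      unfolding \<gamma>0_def by (rule pm_measure[OF finK W0nn p0S that])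
    then show ?thesis unfolding sumK by (simp add: W0_def \<psi>0_def)
  qed
  have mes1: "measure \<gamma>1 X = (\<Sum>j=0..n. \<Sum>i=0..m. B i j * indicator X (if i = 0 then w' else u i, v j))"
    if "X \<in> sets MM" for X
  proof -
    have "measure \<gamma>1 X = (\<Sum>k\<in>K. W1 k * indicator X (\<psi>1 k))"
      unfolding \<gamma>1_def by (rule pm_measure[OF finK W1nn p1S that])
    then show ?thesis unfolding sumK by (subst (asm) sum.swap) (simp add: W1_def \<psi>1_def)
  qed
  have sU: "S2 - U \<in> sets S2B" using finU by (metis finite_in_S2B sets.compl_sets space_S2B U_def image_subsetI u_S2)
  have sV: "S2 - V \<in> sets S2B" using finV by (metis finite_in_S2B sets.compl_sets space_S2B V_def image_subsetI v_S2)
  have R0: "(S2 - U) \<times> S2 \<in> sets MM" using sU by (metis pair_measureI sets.top space_S2B)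
  have R1: "S2 \<times> (S2 - V) \<in> sets MM" using sV by (metis pair_measureI sets.top space_S2B)
  have PS: "U \<times> V \<subseteq> S2 \<times> S2" using u_S2 v_S2 by (auto simp: U_def V_def)
  have RP: "S2 \<times> S2 - U \<times> V \<in> sets MM"
    using finite_in_MM[OF _ PS] finU finV by (metis finite_SigmaI sets.compl_sets space_MM)
  have sing: "{(u i, v j)} \<in> sets MM" if "i \<in> {1..m}" "j \<in> {1..n}" for i j
    using that u_S2 v_S2 by (intro finite_in_MM) auto
  have z0: "emeasure \<gamma>0 ((S2 - U) \<times> S2) = 0"
  proof -
    have "measure \<gamma>0 ((S2 - U) \<times> S2) = 0"
      unfolding mes0[OF R0]
    proof (intro sum.neutral ballI)
      fix i j assume ij: "i \<in> {0..m}" "j \<in> {0..n}"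
      show "A i j * indicator ((S2 - U) \<times> S2) (u i, if j = 0 then w else v j) = 0"
      proof (cases "i = 0")
        case True then show ?thesis using A0 ij by simp
      next
        case False then have "u i \<in> U" using ij by (auto simp: U_def)
        then show ?thesis by simp
      qed
    qed
    then show ?thesis using f0 by (simp add: finite_measure.emeasure_eq_measure)
  qed
  have z1: "emeasure \<gamma>1 (S2 \<times> (S2 - V)) = 0"
  proof -
    have "measure \<gamma>1 (S2 \<times> (S2 - V)) = 0"
      unfolding mes1[OF R1]
    proof (intro sum.neutral ballI)
      fix j i assume ij: "j \<in> {0..n}" "i \<in> {0..m}"
      show "B i j * indicator (S2 \<times> (S2 - V)) (if i = 0 then w' else u i, v j) = 0"
      proof (cases "j = 0")
        case True then show ?thesis using B0 ij by simp
      next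
        case False then have "v j \<in> V" using ij by (auto simp: V_def)
        then show ?thesis by simp
      qed
    qed
    then show ?thesis using f1 by (simp add: finite_measure.emeasure_eq_measure)
  qed
  have r0: "measure \<gamma>0 (S2\<times>S2 - U \<times> V) = (\<Sum>i=1..m. A i 0)"
  proof -
    have t: "(\<Sum>j=0..n. A i j * indicator (S2\<times>S2 - U \<times> V) (u i, if j = 0 then w else v j)) = (if i = 0 then 0 else A i 0)"
      if "i \<in> {0..m}" for i
    proof (cases "i = 0")
      case True then show ?thesis using A0 by simp
    next
      case False
      then have i1: "i \<in> {1..m}" using that by auto
      have "(\<Sum>j=1..n. A i j * indicator (S2\<times>S2 - U \<times> V) (u i, if j = 0 then w else v j)) = 0"
        using i1 by (intro sum.neutral ballI) (auto simp: U_def V_def split: split_indicator)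
      then show ?thesis using False w uS[OF that] by (simp add: sum_from0[of _ n] indicator_def)
    qed
    have "measure \<gamma>0 (S2\<times>S2 - U \<times> V) = (\<Sum>i=0..m. if i = 0 then 0 else A i 0)"
      unfolding mes0[OF RP] using t by (intro sum.cong refl) auto
    also have "\<dots> = (\<Sum>i=1..m. A i 0)" by (simp add: sum_from0[of _ m])
    finally show ?thesis .
  qed
  have r1: "measure \<gamma>1 (S2\<times>S2 - U \<times> V) = (\<Sum>j=1..n. B 0 j)"
  proof -
    have t: "(\<Sum>i=0..m. B i j * indicator (S2\<times>S2 - U \<times> V) (if i = 0 then w' else u i, v j)) = (if j = 0 then 0 else B 0 j)"
      if "j \<in> {0..n}" for j
    proof (cases "j = 0")
      case True then show ?thesis using B0 by simp
    next
      case False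
      then have j1: "j \<in> {1..n}" using that by auto
      have "(\<Sum>i=1..m. B i j * indicator (S2\<times>S2 - U \<times> V) (if i = 0 then w' else u i, v j)) = 0"
        using j1 by (intro sum.neutral ballI) (auto simp: U_def V_def split: split_indicator)
      then show ?thesis using False w' vS[OF that] by (simp add: sum_from0[of _ m] indicator_def)
    qed
    have "measure \<gamma>1 (S2\<times>S2 - U \<times> V) = (\<Sum>j=0..n. if j = 0 then 0 else B 0 j)"
      unfolding mes1[OF RP] using t by (intro sum.cong refl) auto
    also have "\<dots> = (\<Sum>j=1..n. B 0 j)" by (simp add: sum_from0[of _ n])
    finally show ?thesis .
  qed
  have at0: "measure \<gamma>0 {(u i, v j)} = A i j" if i: "i \<in> {1..m}" and j: "j \<in> {1..n}" for i j
  proof -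
    have t: "A i' j' * indicator {(u i, v j)} (u i', if j' = 0 then w else v j') = (if i' = i then if j' = j then A i j else 0 else 0)"
      if "i' \<in> {0..m}" "j' \<in> {0..n}" for i' j'
    proof (cases "i' = 0")
      case True then show ?thesis using A0 that i by auto
    next
      case False
      show ?thesis
      proof (cases "j' = 0")
        case True
        have "v j \<noteq> w" using w j by (auto simp: V_def)
        then show ?thesis using True j by (auto split: split_indicator)
      next
        case False
        have "(u i', v j') = (u i, v j) \<longleftrightarrow> i' = i \<and> j' = j"
          using u_inj v_inj i j that \<open>i' \<noteq> 0\<close> False by (auto dest: inj_onD)
        then show ?thesis using False by (auto split: split_indicator)
      qed
    qed
    have "measure \<gamma>0 {(u i, v j)} = (\<Sum>i'=0..m. \<Sum>j'=0..n. if i' = i then if j' = j then A i j else 0 else 0)"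
      unfolding mes0[OF sing[OF i j]] using t by (intro sum.cong refl) auto
    also have "\<dots> = (\<Sum>i'=0..m. if i' = i then A i j else 0)"
      using j by (intro sum.cong refl) (auto simp: sum.delta)
    also have "\<dots> = A i j" using i by (simp add: sum.delta)
    finally show ?thesis .
  qed
  have at1: "measure \<gamma>1 {(u i, v j)} = B i j" if i: "i \<in> {1..m}" and j: "j \<in> {1..n}" for i j
  proof -
    have t: "B i' j' * indicator {(u i, v j)} (if i' = 0 then w' else u i', v j') = (if j' = j then if i' = i then B i j else 0 else 0)"
      if "i' \<in> {0..m}" "j' \<in> {0..n}" for i' j'
    proof (cases "j' = 0")
      case True then show ?thesis using B0 that j by auto
    next
      case False
      show ?thesis
      proof (cases "i' = 0")
        case True
        have "u i \<noteq> w'" using w' i by (auto simp: U_def)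
        then show ?thesis using True i by (auto split: split_indicator)
      next
        case False
        have "(u i', v j') = (u i, v j) \<longleftrightarrow> i' = i \<and> j' = j"
          using u_inj v_inj i j that \<open>j' \<noteq> 0\<close> False by (auto dest: inj_onD)
        then show ?thesis using False by (auto split: split_indicator)
      qed
    qed
    have "measure \<gamma>1 {(u i, v j)} = (\<Sum>j'=0..n. \<Sum>i'=0..m. if j' = j then if i' = i then B i j else 0 else 0)"
      unfolding mes1[OF sing[OF i j]] using t by (intro sum.cong refl) auto
    also have "\<dots> = (\<Sum>j'=0..n. if j' = j then B i j else 0)"
      using i by (intro sum.cong refl) (auto simp: sum.delta)
    also have "\<dots> = B i j" using j by (simp add: sum.delta)
    finally show ?thesis .
  qed
  have "wfr_cost \<gamma> \<gamma>0 \<gamma>1 = ennreal (Dc m n u v A B)"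
    by (rule cost_eq_D[OF sg sf _ _ f0 f1 ac0 ac1 u_S2 v_S2 u_inj v_inj z0[unfolded U_def] z1[unfolded V_def] AB
          r0[unfolded U_def V_def] r1[unfolded U_def V_def] at0 at1]) (simp_all add: \<gamma>0_def \<gamma>1_def)
  then show ?thesis using G sg sf ac0 ac1 by blast
qed

lemma lower:
  fixes m n :: nat and a b :: "nat \<Rightarrow> real" and u v :: "nat \<Rightarrow> real^3"
    and \<mu> \<nu> :: "(real^3) measure" and \<gamma> \<gamma>0 \<gamma>1 :: "((real^3) \<times> (real^3)) measure"
  assumes u_S2: "\<forall>i\<in>{1..m}. u i \<in> S2"
    and v_S2: "\<forall>j\<in>{1..n}. v j \<in> S2"
    and u_inj: "inj_on u {1..m}"
    and v_inj: "inj_on v {1..n}"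
    and a_pos: "\<forall>i\<in>{1..m}. a i > 0"
    and b_pos: "\<forall>j\<in>{1..n}. b j > 0"
    and mu_sets: "sets \<mu> = sets S2B"
    and mu_def: "\<forall>X\<in>sets \<mu>. emeasure \<mu> X = (\<Sum>i\<in>{1..m}. ennreal (a i) * indicator X (u i))"
    and nu_sets: "sets \<nu> = sets S2B"
    and nu_def: "\<forall>X\<in>sets \<nu>. emeasure \<nu> X = (\<Sum>j\<in>{1..n}. ennreal (b j) * indicator X (v j))"
    and G: "(\<gamma>0, \<gamma>1) \<in> Gamma \<mu> \<nu>" and sg: "sets \<gamma> = sets MM" and sf: "sigma_finite_measure \<gamma>"
    and ac0: "absolutely_continuous \<gamma> \<gamma>0" and ac1: "absolutely_continuous \<gamma> \<gamma>1"
  shows "\<exists>A B. (A, B) \<in> Aset m n a b \<and> wfr_cost \<gamma> \<gamma>0 \<gamma>1 = ennreal (Dc m n u v A B)"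
proof -
  have s0: "sets \<gamma>0 = sets MM" and s1: "sets \<gamma>1 = sets MM" and f0: "finite_measure \<gamma>0"
    and f1: "finite_measure \<gamma>1" and marg0: "distr \<gamma>0 S2B fst = \<mu>" and marg1: "distr \<gamma>1 S2B snd = \<nu>"
    using G by (auto simp: Gamma_def)
  interpret G0: finite_measure \<gamma>0 by (rule f0)
  interpret G1: finite_measure \<gamma>1 by (rule f1)
  have sp0: "space \<gamma>0 = S2 \<times> S2" using sets_eq_imp_space_eq[OF s0] by simp
  have sp1: "space \<gamma>1 = S2 \<times> S2" using sets_eq_imp_space_eq[OF s1] by simp
  have mf: "fst \<in> measurable \<gamma>0 S2B" by (simp add: measurable_cong_sets[OF s0 refl])
  have ms: "snd \<in> measurable \<gamma>1 S2B" by (simp add: measurable_cong_sets[OF s1 refl])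
  have M0: "measure \<gamma>0 (X \<times> S2) = (\<Sum>i=1..m. a i * indicator X (u i))" if X: "X \<in> sets S2B" for X
  proof -
    have XS: "X \<subseteq> S2" using X sets.sets_into_space by fastforce
    have "emeasure \<gamma>0 (X \<times> S2) = emeasure \<gamma>0 (fst -` X \<inter> space \<gamma>0)"
      using XS sp0 by (intro arg_cong[where f="emeasure \<gamma>0"]) auto
    also have "\<dots> = emeasure (distr \<gamma>0 S2B fst) X" by (rule emeasure_distr[OF mf X, symmetric])
    also have "\<dots> = (\<Sum>i=1..m. ennreal (a i) * indicator X (u i))" using marg0 mu_def mu_sets X by simp
    also have "\<dots> = (\<Sum>i=1..m. ennreal (a i * indicator X (u i)))"
      by (intro sum.cong refl) (auto split: split_indicator)
    also have "\<dots> = ennreal (\<Sum>i=1..m. a i * indicator X (u i))"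
      using a_pos by (intro sum_ennreal) (auto simp: less_imp_le)
    finally have e: "emeasure \<gamma>0 (X \<times> S2) = ennreal (\<Sum>i=1..m. a i * indicator X (u i))" .
    have "measure \<gamma>0 (X \<times> S2) = enn2real (emeasure \<gamma>0 (X \<times> S2))" by (simp add: measure_def)
    also have "\<dots> = (\<Sum>i=1..m. a i * indicator X (u i))"
      unfolding e using a_pos by (intro enn2real_ennreal sum_nonneg) (auto simp: less_imp_le)
    finally show ?thesis .
  qed
  have M1: "measure \<gamma>1 (S2 \<times> X) = (\<Sum>j=1..n. b j * indicator X (v j))" if X: "X \<in> sets S2B" for X
  proof -
    have XS: "X \<subseteq> S2" using X sets.sets_into_space by fastforce
    have "emeasure \<gamma>1 (S2 \<times> X) = emeasure \<gamma>1 (snd -` X \<inter> space \<gamma>1)"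
      using XS sp1 by (intro arg_cong[where f="emeasure \<gamma>1"]) auto
    also have "\<dots> = emeasure (distr \<gamma>1 S2B snd) X" by (rule emeasure_distr[OF ms X, symmetric])
    also have "\<dots> = (\<Sum>j=1..n. ennreal (b j) * indicator X (v j))" using marg1 nu_def nu_sets X by simp
    also have "\<dots> = (\<Sum>j=1..n. ennreal (b j * indicator X (v j)))"
      by (intro sum.cong refl) (auto split: split_indicator)
    also have "\<dots> = ennreal (\<Sum>j=1..n. b j * indicator X (v j))"
      using b_pos by (intro sum_ennreal) (auto simp: less_imp_le)
    finally have e: "emeasure \<gamma>1 (S2 \<times> X) = ennreal (\<Sum>j=1..n. b j * indicator X (v j))" .
    have "measure \<gamma>1 (S2 \<times> X) = enn2real (emeasure \<gamma>1 (S2 \<times> X))" by (simp add: measure_def)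
    also have "\<dots> = (\<Sum>j=1..n. b j * indicator X (v j))"
      unfolding e using b_pos by (intro enn2real_ennreal sum_nonneg) (auto simp: less_imp_le)
    finally show ?thesis .
  qed
  define U where "U = u ` {1..m}"
  define V where "V = v ` {1..n}"
  have finU: "finite U" and finV: "finite V" by (simp_all add: U_def V_def)
  have US: "U \<subseteq> S2" and VS: "V \<subseteq> S2" using u_S2 v_S2 by (auto simp: U_def V_def)
  have S2s: "S2 \<in> sets S2B" by (metis sets.top space_S2B)
  have sing: "{(u i, v j)} \<in> sets MM" if "i \<in> {1..m}" "j \<in> {1..n}" for i j
    using that u_S2 v_S2 by (intro finite_in_MM) auto
  define \<alpha> where "\<alpha> i j = measure \<gamma>0 {(u i, v j)}" for i j
  define \<beta> where "\<beta> i j = measure \<gamma>1 {(u i, v j)}" for i j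
  have \<alpha>nn: "\<alpha> i j \<ge> 0" for i j by (simp add: \<alpha>_def)
  have \<beta>nn: "\<beta> i j \<ge> 0" for i j by (simp add: \<beta>_def)
  have rowsum: "(\<Sum>j=1..n. \<alpha> i j) \<le> a i" if i: "i \<in> {1..m}" for i
  proof -
    have inj: "inj_on (\<lambda>j. (u i, v j)) {1..n}" using v_inj unfolding inj_on_def by (metis prod.inject)
    have sub: "(\<lambda>j. (u i, v j)) ` {1..n} \<subseteq> {u i} \<times> S2" using v_S2 by auto
    have ui: "{u i} \<in> sets S2B" using i u_S2 by (intro finite_in_S2B) auto
    have "(\<Sum>j=1..n. \<alpha> i j) = (\<Sum>p\<in>(\<lambda>j. (u i, v j)) ` {1..n}. measure \<gamma>0 {p})"
      unfolding sum.reindex[OF inj] by (simp add: \<alpha>_def)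
    also have "\<dots> = measure \<gamma>0 ((\<lambda>j. (u i, v j)) ` {1..n})"
      using i sing s0 by (intro measure_eq_sum_singleton[symmetric]) auto
    also have "\<dots> \<le> measure \<gamma>0 ({u i} \<times> S2)"
      using sub ui S2s s0 by (intro G0.finite_measure_mono) (auto intro!: pair_measureI)
    also have "\<dots> = (\<Sum>i'=1..m. a i' * indicator {u i} (u i'))" by (rule M0[OF ui])
    also have "\<dots> = (\<Sum>i'=1..m. if i' = i then a i else 0)"
      using i u_inj by (intro sum.cong refl) (auto split: split_indicator dest: inj_onD)
    also have "\<dots> = a i" using i by (simp add: sum.delta)
    finally show ?thesis .
  qed
  have colsum: "(\<Sum>i=1..m. \<beta> i j) \<le> b j" if j: "j \<in> {1..n}" for j
  proof -
    have inj: "inj_on (\<lambda>i. (u i, v j)) {1..m}" using u_inj unfolding inj_on_def by (metis prod.inject)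
    have sub: "(\<lambda>i. (u i, v j)) ` {1..m} \<subseteq> S2 \<times> {v j}" using u_S2 by auto
    have vj: "{v j} \<in> sets S2B" using j v_S2 by (intro finite_in_S2B) auto
    have "(\<Sum>i=1..m. \<beta> i j) = (\<Sum>p\<in>(\<lambda>i. (u i, v j)) ` {1..m}. measure \<gamma>1 {p})"
      unfolding sum.reindex[OF inj] by (simp add: \<beta>_def)
    also have "\<dots> = measure \<gamma>1 ((\<lambda>i. (u i, v j)) ` {1..m})"
      using j sing s1 by (intro measure_eq_sum_singleton[symmetric]) auto
    also have "\<dots> \<le> measure \<gamma>1 (S2 \<times> {v j})"
      using sub vj S2s s1 by (intro G1.finite_measure_mono) (auto intro!: pair_measureI)
    also have "\<dots> = (\<Sum>j'=1..n. b j' * indicator {v j} (v j'))" by (rule M1[OF vj])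
    also have "\<dots> = (\<Sum>j'=1..n. if j' = j then b j else 0)"
      using j v_inj by (intro sum.cong refl) (auto split: split_indicator dest: inj_onD)
    also have "\<dots> = b j" using j by (simp add: sum.delta)
    finally show ?thesis .
  qed
  define A where "A i j = (if i = 0 then 0 else if j = 0 then a i - (\<Sum>j'=1..n. \<alpha> i j') else \<alpha> i j)" for i j
  define B where "B i j = (if j = 0 then 0 else if i = 0 then b j - (\<Sum>i'=1..m. \<beta> i' j) else \<beta> i j)" for i j
  have AB: "(A, B) \<in> Aset m n a b"
    unfolding Aset_def
  proof (clarify, intro conjI ballI)
    fix i j assume "i \<in> {0..m}" "j \<in> {0..n}"
    then show "A i j \<ge> 0" "B i j \<ge> 0"
      using rowsum[of i] colsum[of j] \<alpha>nn \<beta>nn by (auto simp: A_def B_def)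
  next
    fix i assume i: "i \<in> {1..m}"
    then show "a i = (\<Sum>j=0..n. A i j)" by (simp add: sum_from0[of _ n] A_def)
  next
    fix j assume j: "j \<in> {1..n}"
    then show "b j = (\<Sum>i=0..m. B i j)" by (simp add: sum_from0[of _ m] B_def)
  qed (auto simp: A_def B_def)
  have Omega: "S2 \<times> S2 \<in> sets MM" by (metis sets.top space_MM)
  have PS: "U \<times> V \<subseteq> S2 \<times> S2" using US VS by auto
  have Ps: "U \<times> V \<in> sets MM" using finite_in_MM[OF _ PS] finU finV by simp
  have z0: "emeasure \<gamma>0 ((S2 - U) \<times> S2) = 0"
  proof -
    have sU: "S2 - U \<in> sets S2B" using finU US by (metis finite_in_S2B sets.compl_sets space_S2B)
    have "measure \<gamma>0 ((S2 - U) \<times> S2) = 0"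
      unfolding M0[OF sU] by (intro sum.neutral ballI) (auto simp: U_def)
    then show ?thesis by (simp add: G0.emeasure_eq_measure)
  qed
  have z1: "emeasure \<gamma>1 (S2 \<times> (S2 - V)) = 0"
  proof -
    have sV: "S2 - V \<in> sets S2B" using finV VS by (metis finite_in_S2B sets.compl_sets space_S2B)
    have "measure \<gamma>1 (S2 \<times> (S2 - V)) = 0"
      unfolding M1[OF sV] by (intro sum.neutral ballI) (auto simp: V_def)
    then show ?thesis by (simp add: G1.emeasure_eq_measure)
  qed
  have mP0: "measure \<gamma>0 (U \<times> V) = (\<Sum>i=1..m. \<Sum>j=1..n. \<alpha> i j)"
  proof -
    have "measure \<gamma>0 (U \<times> V) = (\<Sum>p\<in>U \<times> V. measure \<gamma>0 {p})"
      using finU finV PS s0 by (intro measure_eq_sum_singleton) (auto intro!: finite_in_MM)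
    also have "\<dots> = (\<Sum>i=1..m. \<Sum>j=1..n. \<alpha> i j)"
      unfolding U_def V_def P_sum[OF u_inj v_inj] by (simp add: \<alpha>_def)
    finally show ?thesis .
  qed
  have mP1: "measure \<gamma>1 (U \<times> V) = (\<Sum>j=1..n. \<Sum>i=1..m. \<beta> i j)"
  proof -
    have "measure \<gamma>1 (U \<times> V) = (\<Sum>p\<in>U \<times> V. measure \<gamma>1 {p})"
      using finU finV PS s1 by (intro measure_eq_sum_singleton) (auto intro!: finite_in_MM)
    also have "\<dots> = (\<Sum>i=1..m. \<Sum>j=1..n. \<beta> i j)"
      unfolding U_def V_def P_sum[OF u_inj v_inj] by (simp add: \<beta>_def)
    finally show ?thesis by (metis sum.swap)
  qed
  have r0: "measure \<gamma>0 (S2 \<times> S2 - U \<times> V) = (\<Sum>i=1..m. A i 0)"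
  proof -
    have "measure \<gamma>0 (S2 \<times> S2 - U \<times> V) = measure \<gamma>0 (S2 \<times> S2) - measure \<gamma>0 (U \<times> V)"
      using Omega Ps PS s0 by (intro G0.finite_measure_Diff) auto
    also have "measure \<gamma>0 (S2 \<times> S2) = (\<Sum>i=1..m. a i)"
      using M0[OF S2s] u_S2 by simp
    finally show ?thesis using mP0 by (simp add: A_def sum_subtractf)
  qed
  have r1: "measure \<gamma>1 (S2 \<times> S2 - U \<times> V) = (\<Sum>j=1..n. B 0 j)"
  proof -
    have "measure \<gamma>1 (S2 \<times> S2 - U \<times> V) = measure \<gamma>1 (S2 \<times> S2) - measure \<gamma>1 (U \<times> V)"
      using Omega Ps PS s1 by (intro G1.finite_measure_Diff) auto
    also have "measure \<gamma>1 (S2 \<times> S2) = (\<Sum>j=1..n. b j)"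
      using M1[OF S2s] v_S2 by simp
    finally show ?thesis using mP1 by (simp add: B_def sum_subtractf)
  qed
  have "wfr_cost \<gamma> \<gamma>0 \<gamma>1 = ennreal (Dc m n u v A B)"
    by (rule cost_eq_D[OF sg sf s0 s1 f0 f1 ac0 ac1 u_S2 v_S2 u_inj v_inj z0[unfolded U_def] z1[unfolded V_def] AB
          r0[unfolded U_def V_def] r1[unfolded U_def V_def]]) (auto simp: A_def B_def \<alpha>_def \<beta>_def)
  then show ?thesis using AB by blast
qed

theorem corollary2p6:
  fixes m n :: nat
    and a b :: "nat \<Rightarrow> real"
    and u v :: "nat \<Rightarrow> real^3"
    and \<mu> \<nu> :: "(real^3) measure"
  assumes u_S2: "\<forall>i\<in>{1..m}. u i \<in> S2"
    and v_S2: "\<forall>j\<in>{1..n}. v j \<in> S2"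
    and u_inj: "inj_on u {1..m}"
    and v_inj: "inj_on v {1..n}"
    and a_pos: "\<forall>i\<in>{1..m}. a i > 0"
    and b_pos: "\<forall>j\<in>{1..n}. b j > 0"
    and u0: "u 0 = e1"
    and v0: "v 0 = e1"
    and mu_sets: "sets \<mu> = sets S2B"
    and mu_def: "\<forall>X\<in>sets \<mu>. emeasure \<mu> X = (\<Sum>i\<in>{1..m}. ennreal (a i) * indicator X (u i))"
    and nu_sets: "sets \<nu> = sets S2B"
    and nu_def: "\<forall>X\<in>sets \<nu>. emeasure \<nu> X = (\<Sum>j\<in>{1..n}. ennreal (b j) * indicator X (v j))"
  shows "(WFR \<mu> \<nu>)\<^sup>2 =
    (INF (A, B) \<in> Aset m n a b.
       \<Sum>i=0..m. \<Sum>j=0..n. (norm (sqrt (A i j) *\<^sub>R u i - sqrt (B i j) *\<^sub>R v j))\<^sup>2)"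
proof -
  define T where "T = {(\<gamma>, \<gamma>0, \<gamma>1). (\<gamma>0, \<gamma>1) \<in> Gamma \<mu> \<nu> \<and>
         sets \<gamma> = sets (S2B \<Otimes>\<^sub>M S2B) \<and> sigma_finite_measure \<gamma> \<and>
         absolutely_continuous \<gamma> \<gamma>0 \<and> absolutely_continuous \<gamma> \<gamma>1}"
  define I where "I = (INF (\<gamma>, \<gamma>0, \<gamma>1) \<in> T. wfr_cost \<gamma> \<gamma>0 \<gamma>1)"
  have W: "WFR \<mu> \<nu> = sqrt (enn2real I)" unfolding WFR_def I_def T_def ..
  define f where "f = (\<lambda>(A, B). Dc m n u v A B)"
  have rhs: "(INF (A, B) \<in> Aset m n a b.
       \<Sum>i=0..m. \<Sum>j=0..n. (norm (sqrt (A i j) *\<^sub>R u i - sqrt (B i j) *\<^sub>R v j))\<^sup>2) = (INF p \<in> Aset m n a b. f p)"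
    unfolding f_def Dc_def ..
  define c where "c = (INF p \<in> Aset m n a b. f p)"
  have fnn: "f p \<ge> 0" for p by (auto simp: f_def Dc_def split: prod.split intro!: sum_nonneg)
  have bdd: "bdd_below (f ` Aset m n a b)" by (rule bdd_belowI[where m=0]) (use fnn in blast)
  define A0 where "A0 = (\<lambda>(i::nat) (j::nat). if 1 \<le> i \<and> j = 0 then a i else (0::real))"
  define B0 where "B0 = (\<lambda>(i::nat) (j::nat). if 1 \<le> j \<and> i = 0 then b j else (0::real))"
  have ne: "(A0, B0) \<in> Aset m n a b"
    using a_pos b_pos by (auto simp: Aset_def A0_def B0_def sum_from0[of _ n] sum_from0[of _ m] less_imp_le)
  then have neA: "Aset m n a b \<noteq> {}" by auto
  have c0: "0 \<le> c" unfolding c_def using neA fnn by (intro cINF_greatest) auto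
  have up: "I \<le> ennreal (f p)" if p: "p \<in> Aset m n a b" for p
  proof -
    obtain A B where pAB: "p = (A, B)" by (cases p)
    obtain \<gamma> \<gamma>0 \<gamma>1 where g: "(\<gamma>0, \<gamma>1) \<in> Gamma \<mu> \<nu>" "sets \<gamma> = sets MM" "sigma_finite_measure \<gamma>"
      "absolutely_continuous \<gamma> \<gamma>0" "absolutely_continuous \<gamma> \<gamma>1" "wfr_cost \<gamma> \<gamma>0 \<gamma>1 = ennreal (Dc m n u v A B)"
      using upper[OF u_S2 v_S2 u_inj v_inj u0 v0 mu_sets mu_def nu_sets nu_def, of A B] p pAB by blast
    have "(\<gamma>, \<gamma>0, \<gamma>1) \<in> T" using g by (simp add: T_def)
    then have "I \<le> wfr_cost \<gamma> \<gamma>0 \<gamma>1" unfolding I_def by (rule INF_lower2) simp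
    then show ?thesis using g pAB by (simp add: f_def)
  qed
  have low: "ennreal c \<le> I"
    unfolding I_def
  proof (rule INF_greatest)
    fix t assume "t \<in> T"
    then obtain \<gamma> \<gamma>0 \<gamma>1 where t: "t = (\<gamma>, \<gamma>0, \<gamma>1)" and g: "(\<gamma>0, \<gamma>1) \<in> Gamma \<mu> \<nu>" "sets \<gamma> = sets MM"
      "sigma_finite_measure \<gamma>" "absolutely_continuous \<gamma> \<gamma>0" "absolutely_continuous \<gamma> \<gamma>1"
      by (auto simp: T_def)
    obtain A B where AB: "(A, B) \<in> Aset m n a b" and e: "wfr_cost \<gamma> \<gamma>0 \<gamma>1 = ennreal (Dc m n u v A B)"
      using lower[OF u_S2 v_S2 u_inj v_inj a_pos b_pos mu_sets mu_def nu_sets nu_def g] by blast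
    have "c \<le> f (A, B)" unfolding c_def by (rule cINF_lower[OF bdd AB])
    then show "ennreal c \<le> (case t of (\<gamma>, \<gamma>0, \<gamma>1) \<Rightarrow> wfr_cost \<gamma> \<gamma>0 \<gamma>1)"
      using t e by (simp add: f_def ennreal_leI)
  qed
  have Ifin: "I < top" using up[OF ne] by (simp add: le_less_trans)
  have "enn2real I \<le> c" unfolding c_def
  proof (rule cINF_greatest[OF neA])
    fix p assume "p \<in> Aset m n a b"
    then have "enn2real I \<le> enn2real (ennreal (f p))" using up by (intro enn2real_mono) auto
    then show "enn2real I \<le> f p" using fnn by simp
  qed
  moreover have "c \<le> enn2real I"
    using enn2real_mono[OF low Ifin] c0 by simp
  ultimately have "enn2real I = c" by simp
  then show ?thesis using W rhs c_def c0 by simp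
qed

end
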